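(* Let $P$ be a set of $n$ points in $\mathbb{R}^d$ and let $k$ be an integer with $2\le k\le n$. Then there exist a point $q\in\mathbb{R}^d$ and a partition of $P$ into $k$ sets $P_1,\dots,P_k$ such that \[ d(q,\operatorname{conv}P_i)\le (2+\sqrt2)\sqrt{\frac kn}\,\operatorname{diam}P\qquad\text{for every } i\in[k]. \]
   Context: $d(q,S)$ is the Euclidean distance from a point $q$ to a set $S$; $\operatorname{diam}P$ is the Euclidean diameter; $[k]=\{1,\dots,k\}$. *)

theory Defs
  imports "HOL-Analysis.Analysis"
begin

end

theory Submission
  imports Defs "HOL-Combinatorics.Permutations"
begin

lemma sum_transpose_in:
  fixes h :: "'c \<Rightarrow> 'b::ab_group_add"
  assumes "finite B" "a \<in> B" "b \<notin> B"
  shows "(\<Sum>t\<in>B. h (Transposition.transpose a b t)) = (\<Sum>t\<in>B. h t) - h a + h b"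
proof -
  have "(\<Sum>t\<in>B. h (Transposition.transpose a b t)) = h b + (\<Sum>t\<in>B-{a}. h (Transposition.transpose a b t))"
    using sum.remove[OF assms(1,2), of "\<lambda>t. h (Transposition.transpose a b t)"] by simp
  also have "(\<Sum>t\<in>B-{a}. h (Transposition.transpose a b t)) = (\<Sum>t\<in>B-{a}. h t)"
    using assms by (intro sum.cong) (auto simp: Transposition.transpose_def)
  also have "(\<Sum>t\<in>B-{a}. h t) = (\<Sum>t\<in>B. h t) - h a"
    using sum.remove[OF assms(1,2), of h] by simp
  finally show ?thesis by (simp add: algebra_simps)
qed

lemma sum_transpose_out:
  assumes "a \<notin> B" "b \<notin> B"
  shows "(\<Sum>t\<in>B. h (Transposition.transpose a b t)) = (\<Sum>t\<in>B. h t)"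
  using assms by (intro sum.cong) (auto simp: Transposition.transpose_def)

lemma blocks_disj:
  fixes i l m :: nat
  assumes "a \<in> {i*m..<i*m+m}" "a \<in> {l*m..<l*m+m}"
  shows "i = l"
proof (rule ccontr)
  assume "i \<noteq> l"
  then consider "i < l" | "l < i" by linarith
  then show False
  proof cases
    case 1
    then have "(i+1)*m \<le> l*m" by (intro mult_le_mono) auto
    then show False using assms by auto
  next
    case 2
    then have "(l+1)*m \<le> i*m" by (intro mult_le_mono) auto
    then show False using assms by auto
  qed
qed

lemma block_sub:
  fixes i k m :: nat
  assumes "i < k"
  shows "{i*m..<i*m+m} \<subseteq> {..<k*m}"
proof -
  have "(i+1)*m \<le> k*m" using assms by (intro mult_le_mono) auto
  then show ?thesis by auto
qed

lemma core:
  fixes v :: "nat \<Rightarrow> 'a::real_inner" and k m :: nat and D :: real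
  assumes m: "0 < m" and k: "0 < k" and D: "0 \<le> D"
    and sum0: "(\<Sum>t<k*m. v t) = 0"
    and dst: "\<And>a b. a < k*m \<Longrightarrow> b < k*m \<Longrightarrow> norm (v a - v b) \<le> D"
  shows "\<exists>\<sigma>. \<sigma> permutes {..<k*m} \<and> (\<forall>i<k. norm (\<Sum>t\<in>{i*m..<i*m+m}. v (\<sigma> t)) \<le> sqrt m * D)"
proof -
  define S where "S = {..<k*m}"
  define B where "B i = {i*m..<i*m+m}" for i
  define s where "s \<sigma> i = (\<Sum>t\<in>B i. v (\<sigma> t))" for \<sigma> i
  define \<Phi> where "\<Phi> \<sigma> = (\<Sum>l<k. (norm (s \<sigma> l))^2)" for \<sigma>
  have fin: "finite {\<sigma>. \<sigma> permutes S}" by (simp add: S_def finite_permutations)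
  have ne: "{\<sigma>. \<sigma> permutes S} \<noteq> {}" using permutes_id by blast
  obtain \<sigma> where \<sigma>: "\<sigma> permutes S" and min: "\<And>\<tau>. \<tau> permutes S \<Longrightarrow> \<Phi> \<sigma> \<le> \<Phi> \<tau>"
    using ex_is_arg_min_if_finite[OF fin ne, of \<Phi>] unfolding is_arg_min_linorder by auto
  have cardB: "card (B i) = m" for i by (simp add: B_def)
  have finB: "finite (B i)" for i by (simp add: B_def)
  have BS: "i < k \<Longrightarrow> B i \<subseteq> S" for i using block_sub by (simp add: B_def S_def)
  have Bdisj: "a \<in> B i \<Longrightarrow> a \<in> B l \<Longrightarrow> i = l" for a i l using blocks_disj unfolding B_def by blast
  have swap: "(s \<sigma> i - s \<sigma> j) \<bullet> (v (\<sigma> a) - v (\<sigma> b)) \<le> D^2"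
    if ij: "i < k" "j < k" "i \<noteq> j" and ab: "a \<in> B i" "b \<in> B j" for i j a b
  proof -
    define \<tau> where "\<tau> = \<sigma> \<circ> Transposition.transpose a b"
    have aS: "a \<in> S" "b \<in> S" using BS ij ab by auto
    have \<tau>p: "\<tau> permutes S" unfolding \<tau>_def by (rule permutes_compose[OF permutes_swap_id[OF aS] \<sigma>])
    have bnot: "b \<notin> B i" using Bdisj ab ij by blast
    have anot: "a \<notin> B j" using Bdisj ab ij by blast
    define u where "u = v (\<sigma> a) - v (\<sigma> b)"
    have si: "s \<tau> i = s \<sigma> i - u"
      unfolding s_def \<tau>_def u_def using sum_transpose_in[OF finB ab(1) bnot, of "\<lambda>t. v (\<sigma> t)"] by simp
    have sj: "s \<tau> j = s \<sigma> j + u"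
      unfolding s_def \<tau>_def u_def using sum_transpose_in[OF finB ab(2) anot, of "\<lambda>t. v (\<sigma> t)"] transpose_commute[of a b] by simp
    have sl: "s \<tau> l = s \<sigma> l" if "l \<noteq> i" "l \<noteq> j" for l
    proof -
      have "a \<notin> B l" "b \<notin> B l" using Bdisj ab that by blast+
      then show ?thesis unfolding s_def \<tau>_def using sum_transpose_out by simp
    qed
    have "\<Phi> \<tau> - \<Phi> \<sigma> = (\<Sum>l<k. (norm (s \<tau> l))^2 - (norm (s \<sigma> l))^2)"
      unfolding \<Phi>_def by (simp add: sum_subtractf)
    also have "\<dots> = (\<Sum>l\<in>{i,j}. (norm (s \<tau> l))^2 - (norm (s \<sigma> l))^2)"
      using ij sl by (intro sum.mono_neutral_right) auto
    also have "\<dots> = (norm (s \<tau> i))^2 - (norm (s \<sigma> i))^2 + ((norm (s \<tau> j))^2 - (norm (s \<sigma> j))^2)"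
      using ij by simp
    finally have eq: "\<Phi> \<tau> - \<Phi> \<sigma> = (norm (s \<tau> i))^2 - (norm (s \<sigma> i))^2 + ((norm (s \<tau> j))^2 - (norm (s \<sigma> j))^2)" .
    have "0 \<le> \<Phi> \<tau> - \<Phi> \<sigma>" using min[OF \<tau>p] by simp
    also have "(norm (s \<tau> i))^2 = (norm (s \<sigma> i))^2 - 2 * (s \<sigma> i \<bullet> u) + (norm u)^2"
      unfolding si by (simp add: power2_norm_eq_inner inner_diff_left inner_diff_right inner_commute)
    moreover have "(norm (s \<tau> j))^2 = (norm (s \<sigma> j))^2 + 2 * (s \<sigma> j \<bullet> u) + (norm u)^2"
      unfolding sj by (simp add: power2_norm_eq_inner inner_add_left inner_add_right inner_commute)
    ultimately have "(s \<sigma> i - s \<sigma> j) \<bullet> u \<le> (norm u)^2"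
      using eq by (simp add: inner_diff_left)
    moreover have "norm u \<le> D"
      unfolding u_def using aS \<sigma> by (intro dst) (use permutes_in_image[OF \<sigma>[unfolded S_def]] in \<open>auto simp: S_def\<close>)
    then have "(norm u)^2 \<le> D^2" by (intro power_mono) auto
    ultimately show ?thesis unfolding u_def by linarith
  qed
  have pair: "(norm (s \<sigma> i - s \<sigma> j))^2 \<le> m * D^2" if ij: "i < k" "j < k" for i j
  proof (cases "i = j")
    case True then show ?thesis by simp
  next
    case False
    define d where "d = s \<sigma> i - s \<sigma> j"
    have inner: "(\<Sum>b\<in>B j. d \<bullet> (v (\<sigma> a) - v (\<sigma> b))) = m * (d \<bullet> v (\<sigma> a)) - d \<bullet> s \<sigma> j" for a
      by (simp add: inner_diff_right sum_subtractf inner_sum_right[symmetric] cardB s_def)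
    have "(\<Sum>a\<in>B i. \<Sum>b\<in>B j. d \<bullet> (v (\<sigma> a) - v (\<sigma> b))) = (\<Sum>a\<in>B i. m * (d \<bullet> v (\<sigma> a)) - d \<bullet> s \<sigma> j)"
      using inner by simp
    also have "\<dots> = m * (d \<bullet> s \<sigma> i) - m * (d \<bullet> s \<sigma> j)"
      by (simp add: sum_subtractf inner_sum_right[symmetric] cardB s_def sum_distrib_left[symmetric])
    also have "\<dots> = m * (norm d)^2"
      by (simp add: d_def power2_norm_eq_inner inner_diff_right algebra_simps)
    finally have L: "(\<Sum>a\<in>B i. \<Sum>b\<in>B j. d \<bullet> (v (\<sigma> a) - v (\<sigma> b))) = m * (norm d)^2" .
    have "(\<Sum>a\<in>B i. \<Sum>b\<in>B j. d \<bullet> (v (\<sigma> a) - v (\<sigma> b))) \<le> (\<Sum>a\<in>B i. \<Sum>b\<in>B j. D^2)"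
      unfolding d_def using swap[OF ij False] by (intro sum_mono) auto
    also have "\<dots> = m * (m * D^2)" by (simp add: cardB)
    finally have "m * (norm d)^2 \<le> m * (m * D^2)" using L by simp
    then show ?thesis using m unfolding d_def by simp
  qed
  have tot: "(\<Sum>l<k. s \<sigma> l) = 0"
  proof -
    have "(\<Sum>l<k. s \<sigma> l) = (\<Sum>t<k*m. v (\<sigma> t))"
      unfolding s_def B_def using sum.nat_group[of "\<lambda>t. v (\<sigma> t)" m k] by (simp add: mult.commute)
    also have "\<dots> = (\<Sum>t<k*m. v t)"
      using sum.permute[OF \<sigma>[unfolded S_def], of v] by (simp add: comp_def)
    finally show ?thesis using sum0 by simp
  qed
  have "norm (s \<sigma> i) \<le> sqrt m * D" if i: "i < k" for i
  proof -
    have "(\<Sum>l<k. s \<sigma> i - s \<sigma> l) = of_nat k *\<^sub>R s \<sigma> i"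
      using tot by (simp add: sum_subtractf sum_constant_scaleR)
    then have "real k * norm (s \<sigma> i) = norm (\<Sum>l<k. s \<sigma> i - s \<sigma> l)" by simp
    also have "\<dots> \<le> (\<Sum>l<k. norm (s \<sigma> i - s \<sigma> l))" by (rule norm_sum)
    also have "\<dots> \<le> (\<Sum>l<k. sqrt m * D)"
    proof (intro sum_mono)
      fix l assume "l \<in> {..<k}"
      then have "norm (s \<sigma> i - s \<sigma> l) \<le> sqrt (m * D^2)" using pair[OF i] by (intro real_le_rsqrt) auto
      also have "\<dots> = sqrt m * D" using D by (simp add: real_sqrt_mult)
      finally show "norm (s \<sigma> i - s \<sigma> l) \<le> sqrt m * D" .
    qed
    also have "\<dots> = real k * (sqrt m * D)" by simp
    finally show ?thesis using k by simp
  qed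
  then show ?thesis using \<sigma> unfolding S_def s_def B_def by blast
qed

lemma final_ineq:
  fixes n k m :: nat and D :: real
  assumes m: "0 < m" and k: "0 < k" and md: "m = n div k" and D: "0 \<le> D"
  shows "(1 / real m) * (sqrt m * D) \<le> (2 + sqrt 2) * sqrt (real k / real n) * D"
proof -
  have e1: "n div k * k + n mod k = n" by (rule div_mult_mod_eq)
  have e2: "n mod k < k" using k by simp
  have e3: "k * m = n div k * k" using md by simp
  have "n < k * m + k" using e1 e2 e3 by linarith
  then have "n < k * (m + 1)" by simp
  then have "real n < real k * (real m + 1)" by (metis of_nat_add of_nat_less_iff of_nat_mult of_nat_1)
  moreover have "real k * (real m + 1) \<le> 4 * real k * real m" using m k
    by (simp add: algebra_simps)
  ultimately have nle: "real n \<le> 4 * real k * real m" by linarith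
  have npos: "0 < real n" using m k md by (metis div_0 gr0I of_nat_0_less_iff)
  have "1 / real m \<le> 4 * real k / real n" using nle npos m
    by (simp add: field_simps)
  then have "sqrt (1 / real m) \<le> sqrt (4 * (real k / real n))" by (intro real_sqrt_le_mono) simp
  also have "\<dots> = sqrt 4 * sqrt (real k / real n)" by (rule real_sqrt_mult)
  also have "sqrt 4 = (2::real)" by (rule real_sqrt_unique) auto
  finally have A: "sqrt (1 / real m) \<le> 2 * sqrt (real k / real n)" .
  have sm: "sqrt (real m) * sqrt (real m) = real m" by simp
  have sp: "0 < sqrt (real m)" using m by simp
  have "(1 / real m) * sqrt m = 1 / sqrt m" using sm sp by (metis nonzero_mult_div_cancel_left divide_divide_eq_left div_by_1 divide_self_if less_irrefl times_divide_eq_left mult_1)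
  also have "\<dots> = sqrt (1 / real m)" by (simp add: real_sqrt_divide)
  finally have "(1 / real m) * sqrt m = sqrt (1 / real m)" .
  then have "(1 / real m) * (sqrt m * D) = sqrt (1 / real m) * D" by (metis mult.assoc)
  also have "\<dots> \<le> 2 * sqrt (real k / real n) * D" using A D by (intro mult_right_mono) auto
  also have "\<dots> \<le> (2 + sqrt 2) * sqrt (real k / real n) * D" using D by (intro mult_right_mono) auto
  finally show ?thesis .
qed

theorem theorem1p3:
  fixes P :: "'a::euclidean_space set" and n k :: nat
  assumes "finite P" and "card P = n" and "2 \<le> k" and "k \<le> n"
  shows "\<exists>(q::'a) (Q :: nat \<Rightarrow> 'a set).
           (\<forall>i\<in>{1..k}. Q i \<noteq> {}) \<and>
           (\<forall>i\<in>{1..k}. \<forall>j\<in>{1..k}. i \<noteq> j \<longrightarrow> Q i \<inter> Q j = {}) \<and>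
           (\<Union>i\<in>{1..k}. Q i) = P \<and>
           (\<forall>i\<in>{1..k}. infdist q (convex hull (Q i))
                \<le> (2 + sqrt 2) * sqrt (real k / real n) * diameter P)"
proof -
  define m where "m = n div k"
  have k0: "0 < k" using assms by simp
  have m0: "0 < m" unfolding m_def using assms by (simp add: div_greater_zero_iff)
  have Nn: "k * m \<le> n" unfolding m_def by (metis div_mult_mod_eq le_add1 mult.commute)
  obtain e where e: "bij_betw e {0..<n} P" using ex_bij_betw_nat_finite[OF assms(1)] assms(2) by blast
  have eP: "t < n \<Longrightarrow> e t \<in> P" for t using e by (auto dest: bij_betwE)
  define D where "D = diameter P"
  define c where "c = (1 / real (k*m)) *\<^sub>R (\<Sum>t<k*m. e t)"
  define v where "v t = e t - c" for t
  have kmpos: "0 < real (k*m)" using k0 m0 by simp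
  have sum0: "(\<Sum>t<k*m. v t) = 0"
    unfolding v_def c_def using kmpos by (simp add: sum_subtractf sum_constant_scaleR)
  have dst: "norm (v a - v b) \<le> D" if "a < k*m" "b < k*m" for a b
  proof -
    have "norm (v a - v b) = dist (e a) (e b)" by (simp add: v_def dist_norm)
    also have "\<dots> \<le> D" unfolding D_def using that Nn
      by (intro diameter_bounded_bound finite_imp_bounded assms(1) eP) auto
    finally show ?thesis .
  qed
  have D0: "0 \<le> D" using dst[of 0 0] k0 m0 by simp
  obtain \<sigma> where \<sigma>: "\<sigma> permutes {..<k*m}"
    and sb: "\<And>i. i<k \<Longrightarrow> norm (\<Sum>t\<in>{i*m..<i*m+m}. v (\<sigma> t)) \<le> sqrt m * D"
    using core[OF m0 k0 D0 sum0 dst] by blast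
  have \<sigma>n: "\<sigma> permutes {..<n}" by (rule permutes_subset[OF \<sigma>]) (use Nn in auto)
  define I where "I i = {(i-1)*m..<(i-1)*m+m} \<union> (if i = 1 then {k*m..<n} else {})" for i
  define Q where "Q i = (e \<circ> \<sigma>) ` I i" for i
  have blk: "{(i-1)*m..<(i-1)*m+m} \<subseteq> {..<k*m}" if "i \<in> {1..k}" for i
  proof -
    have "i - 1 < k" using that by auto
    then show ?thesis by (rule block_sub)
  qed
  have Isub: "I i \<subseteq> {..<n}" if "i \<in> {1..k}" for i
    using blk[OF that] Nn unfolding I_def by auto
  have inj: "inj_on (e \<circ> \<sigma>) {..<n}"
  proof (rule comp_inj_on)
    show "inj_on \<sigma> {..<n}" using permutes_inj[OF \<sigma>n] by (simp add: inj_on_def)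
    show "inj_on e (\<sigma> ` {..<n})" using e permutes_image[OF \<sigma>n] by (simp add: bij_betw_def atLeast0LessThan)
  qed
  have Iun: "(\<Union>i\<in>{1..k}. I i) = {..<n}"
  proof
    show "(\<Union>i\<in>{1..k}. I i) \<subseteq> {..<n}" using Isub by blast
    show "{..<n} \<subseteq> (\<Union>i\<in>{1..k}. I i)"
    proof
      fix t assume t: "t \<in> {..<n}"
      show "t \<in> (\<Union>i\<in>{1..k}. I i)"
      proof (cases "t < k*m")
        case True
        define i where "i = t div m + 1"
        have "t div m < k" using True by (simp add: less_mult_imp_div_less)
        then have i: "i \<in> {1..k}" unfolding i_def by auto
        have "t div m * m \<le> t" by (rule div_times_less_eq_dividend)
        moreover have "t < t div m * m + m" using m0
          by (metis add_less_cancel_left div_mult_mod_eq mod_less_divisor)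
        ultimately have "t \<in> I i" unfolding I_def i_def by auto
        then show ?thesis using i by blast
      next
        case False
        then have "t \<in> I 1" using t unfolding I_def by auto
        then show ?thesis using k0 by force
      qed
    qed
  qed
  have ne: "Q i \<noteq> {}" if "i \<in> {1..k}" for i
  proof -
    have "(i-1)*m \<in> I i" unfolding I_def using m0 by auto
    then show ?thesis unfolding Q_def by blast
  qed
  have disj: "Q i \<inter> Q j = {}" if ij: "i \<in> {1..k}" "j \<in> {1..k}" "i \<noteq> j" for i j
  proof -
    have "I i \<inter> I j = {}"
    proof (rule ccontr)
      assume "I i \<inter> I j \<noteq> {}"
      then obtain t where t: "t \<in> I i" "t \<in> I j" by blast
      show False
      proof (cases "t < k*m")
        case True
        then have "t \<in> {(i-1)*m..<(i-1)*m+m}" "t \<in> {(j-1)*m..<(j-1)*m+m}" using t unfolding I_def by (auto split: if_splits)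
        then have "i - 1 = j - 1" by (rule blocks_disj)
        then show False using ij by auto
      next
        case False
        then have "t \<notin> {(i-1)*m..<(i-1)*m+m}" "t \<notin> {(j-1)*m..<(j-1)*m+m}" using blk[OF ij(1)] blk[OF ij(2)] by auto
        then have "i = 1" "j = 1" using t unfolding I_def by (auto split: if_splits)
        then show False using ij by simp
      qed
    qed
    then show ?thesis unfolding Q_def using inj_on_image_Int[OF inj Isub[OF ij(1)] Isub[OF ij(2)]] by simp
  qed
  have un: "(\<Union>i\<in>{1..k}. Q i) = P"
  proof -
    have "(\<Union>i\<in>{1..k}. Q i) = (e \<circ> \<sigma>) ` (\<Union>i\<in>{1..k}. I i)" unfolding Q_def by blast
    also have "\<dots> = e ` (\<sigma> ` {..<n})" using Iun by (simp add: image_comp)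
    also have "\<dots> = e ` {0..<n}" using permutes_image[OF \<sigma>n] by (simp add: atLeast0LessThan)
    also have "\<dots> = P" using e by (simp add: bij_betw_def)
    finally show ?thesis .
  qed
  have dq: "infdist c (convex hull (Q i)) \<le> (2 + sqrt 2) * sqrt (real k / real n) * D"
    if i: "i \<in> {1..k}" for i
  proof -
    define B where "B = {(i-1)*m..<(i-1)*m+m}"
    define ci where "ci = (\<Sum>t\<in>B. (1 / real m) *\<^sub>R e (\<sigma> t))"
    have cardB: "card B = m" unfolding B_def by simp
    have "ci \<in> convex hull (Q i)" unfolding ci_def
    proof (rule convex_sum)
      show "finite B" unfolding B_def by simp
      show "convex (convex hull Q i)" by (rule convex_convex_hull)
      show "(\<Sum>t\<in>B. 1 / real m) = 1" using cardB m0 by simp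
      show "\<And>t. t \<in> B \<Longrightarrow> 0 \<le> 1 / real m" by simp
      show "\<And>t. t \<in> B \<Longrightarrow> e (\<sigma> t) \<in> convex hull Q i"
        by (rule hull_inc) (auto simp: Q_def I_def B_def)
    qed
    then have "infdist c (convex hull (Q i)) \<le> dist c ci" by (rule infdist_le)
    also have "dist c ci = norm (ci - c)" by (simp add: dist_norm norm_minus_commute)
    also have "ci - c = (1 / real m) *\<^sub>R (\<Sum>t\<in>B. v (\<sigma> t))"
      unfolding ci_def v_def using cardB m0
      by (simp add: sum_subtractf sum_constant_scaleR scaleR_right_diff_distrib scaleR_sum_right)
    also have "norm \<dots> = (1 / real m) * norm (\<Sum>t\<in>B. v (\<sigma> t))" by simp
    also have "\<dots> \<le> (1 / real m) * (sqrt m * D)"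
      using sb[of "i-1"] i unfolding B_def by (intro mult_left_mono) auto
    also have "\<dots> \<le> (2 + sqrt 2) * sqrt (real k / real n) * D"
      by (rule final_ineq[OF m0 k0 m_def D0])
    finally show ?thesis .
  qed
  show ?thesis
    apply (rule exI[of _ c], rule exI[of _ Q])
    using ne disj un dq unfolding D_def by blast
qed

end
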